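(* If a generalised binary matrix $\mathbf{Y}$ is minimally non-firm, then every row and every column of $\mathbf{Y}$ contains at least two non-zero entries (entries equal to $1$ or $?$).
   Context: A generalised binary matrix is a matrix with entries in $\{0,1,?\}$. For such $\mathbf{Y}$, $\mathrm{supp}(\mathbf{Y})=\{(i,j):y_{i,j}=1\}$. A submatrix indexed by $I\times J$ is obtained by deleting rows not in $I$ and columns not in $J$; it is proper if it omits at least one row or column. A rectangle of $\mathbf{Y}$ is a set $I\times J$ of positions containing no entry equal to $0$. An isolated set is a subset of $\mathrm{supp}(\mathbf{Y})$ no two distinct elements of which lie in a common rectangle; $i(\mathbf{Y})$ is the maximum size of an isolated set. $br(\mathbf{Y})$ is the minimum number of rectangles whose union contains $\mathrm{supp}(\mathbf{Y})$ ($?$ entries need not be covered). $\mathbf{Y}$ is minimally non-firm if $i(\mathbf{Y})<br(\mathbf{Y})$ and $i(\mathbf{Y}')=br(\mathbf{Y}')$ for every proper submatrix $\mathbf{Y}'$ of $\mathbf{Y}$. *)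

theory Defs
  imports Main
begin

datatype gentry = Zero | One | Quest

text \<open>A generalised binary matrix is given by a finite set of row indices R,
a finite set of column indices C and an entry function Y. A submatrix indexed
by I \<times> J (I \<subseteq> R, J \<subseteq> C) is the same entry function restricted to I and J.\<close>

definition supp :: "nat set \<Rightarrow> nat set \<Rightarrow> (nat \<Rightarrow> nat \<Rightarrow> gentry) \<Rightarrow> (nat \<times> nat) set" where
  "supp R C Y = {(i,j). i \<in> R \<and> j \<in> C \<and> Y i j = One}"

definition is_rectangle :: "nat set \<Rightarrow> nat set \<Rightarrow> (nat \<Rightarrow> nat \<Rightarrow> gentry) \<Rightarrow> (nat \<times> nat) set \<Rightarrow> bool" where
  "is_rectangle R C Y S \<longleftrightarrow>
     (\<exists>I J. I \<subseteq> R \<and> J \<subseteq> C \<and> S = I \<times> J \<and> (\<forall>i\<in>I. \<forall>j\<in>J. Y i j \<noteq> Zero))"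

definition isolated :: "nat set \<Rightarrow> nat set \<Rightarrow> (nat \<Rightarrow> nat \<Rightarrow> gentry) \<Rightarrow> (nat \<times> nat) set \<Rightarrow> bool" where
  "isolated R C Y X \<longleftrightarrow> X \<subseteq> supp R C Y \<and>
     (\<forall>x\<in>X. \<forall>y\<in>X. x \<noteq> y \<longrightarrow> \<not> (\<exists>S. is_rectangle R C Y S \<and> x \<in> S \<and> y \<in> S))"

definition iso_num :: "nat set \<Rightarrow> nat set \<Rightarrow> (nat \<Rightarrow> nat \<Rightarrow> gentry) \<Rightarrow> nat" where
  "iso_num R C Y = Max {card X | X. isolated R C Y X}"

definition br :: "nat set \<Rightarrow> nat set \<Rightarrow> (nat \<Rightarrow> nat \<Rightarrow> gentry) \<Rightarrow> nat" where
  "br R C Y = Min {card F | F. finite F \<and> (\<forall>S\<in>F. is_rectangle R C Y S) \<and> supp R C Y \<subseteq> \<Union>F}"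

definition minimally_non_firm :: "nat set \<Rightarrow> nat set \<Rightarrow> (nat \<Rightarrow> nat \<Rightarrow> gentry) \<Rightarrow> bool" where
  "minimally_non_firm R C Y \<longleftrightarrow> iso_num R C Y < br R C Y \<and>
     (\<forall>I J. I \<subseteq> R \<and> J \<subseteq> C \<and> (I \<noteq> R \<or> J \<noteq> C) \<longrightarrow> iso_num I J Y = br I J Y)"

end

theory Submission
  imports Defs
begin

lemma ne_in: "x \<in> A \<Longrightarrow> A \<noteq> {}" by auto

lemma isolated_sub: "isolated R C Y X \<Longrightarrow> X \<subseteq> R \<times> C"
  unfolding isolated_def supp_def by auto

lemma iso_fin:
  assumes "finite R" "finite C"
  shows "finite {card X | X. isolated R C Y X}" "{card X | X. isolated R C Y X} \<noteq> {}"
proof -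
  have "{card X | X. isolated R C Y X} \<subseteq> {..card (R \<times> C)}"
    using isolated_sub assms by (fastforce intro: card_mono)
  then show "finite {card X | X. isolated R C Y X}" by (rule finite_subset) simp
  have "isolated R C Y {}" unfolding isolated_def by auto
  then show "{card X | X. isolated R C Y X} \<noteq> {}" by blast
qed

lemma iso_ge: "finite R \<Longrightarrow> finite C \<Longrightarrow> isolated R C Y X \<Longrightarrow> card X \<le> iso_num R C Y"
proof -
  assume a: "finite R" "finite C" "isolated R C Y X"
  have "card X \<in> {card X | X. isolated R C Y X}" using a(3) by (intro CollectI exI[of _ X]) simp
  then show ?thesis unfolding iso_num_def by (rule Max_ge[OF iso_fin(1)[OF a(1,2)]])
qed

lemma iso_ex: "finite R \<Longrightarrow> finite C \<Longrightarrow> \<exists>X. isolated R C Y X \<and> card X = iso_num R C Y"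
proof -
  assume a: "finite R" "finite C"
  have "Max {card X | X. isolated R C Y X} \<in> {card X | X. isolated R C Y X}"
    using Max_in[OF iso_fin[OF a]] .
  then show ?thesis unfolding iso_num_def by auto
qed

lemma rect_sub: "is_rectangle R C Y S \<Longrightarrow> S \<subseteq> R \<times> C"
  unfolding is_rectangle_def by auto

lemma br_fin:
  assumes "finite R" "finite C"
  shows "finite {card F | F. finite F \<and> (\<forall>S\<in>F. is_rectangle R C Y S) \<and> supp R C Y \<subseteq> \<Union>F}"
        "{card F | F. finite F \<and> (\<forall>S\<in>F. is_rectangle R C Y S) \<and> supp R C Y \<subseteq> \<Union>F} \<noteq> {}"
proof -
  have "{card F | F. finite F \<and> (\<forall>S\<in>F. is_rectangle R C Y S) \<and> supp R C Y \<subseteq> \<Union>F}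
        \<subseteq> {..card (Pow (R \<times> C))}"
  proof
    fix k assume "k \<in> {card F | F. finite F \<and> (\<forall>S\<in>F. is_rectangle R C Y S) \<and> supp R C Y \<subseteq> \<Union>F}"
    then obtain F where "k = card F" and FR: "\<forall>S\<in>F. is_rectangle R C Y S" by blast
    have "F \<subseteq> Pow (R \<times> C)"
    proof (rule subsetI, rule PowI)
      fix S assume "S \<in> F"
      then have "is_rectangle R C Y S" using FR by simp
      then show "S \<subseteq> R \<times> C" by (rule rect_sub)
    qed
    then show "k \<in> {..card (Pow (R \<times> C))}" using \<open>k = card F\<close> assms
      by (simp add: card_mono)
  qed
  then show "finite {card F | F. finite F \<and> (\<forall>S\<in>F. is_rectangle R C Y S) \<and> supp R C Y \<subseteq> \<Union>F}"
    by (rule finite_subset) simp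
  let ?F = "(\<lambda>p. {p}) ` supp R C Y"
  have "supp R C Y \<subseteq> R \<times> C" unfolding supp_def by auto
  then have "finite (supp R C Y)" by (rule finite_subset) (simp add: assms)
  moreover have "\<forall>S\<in>?F. is_rectangle R C Y S"
  proof
    fix S assume "S \<in> ?F"
    then obtain a b where ab: "S = {(a,b)}" "(a,b) \<in> supp R C Y" by auto
    then show "is_rectangle R C Y S" unfolding is_rectangle_def supp_def
      by (intro exI[of _ "{a}"] exI[of _ "{b}"]) auto
  qed
  moreover have "supp R C Y \<subseteq> \<Union>?F" by auto
  ultimately have "card ?F \<in> {card F | F. finite F \<and> (\<forall>S\<in>F. is_rectangle R C Y S) \<and> supp R C Y \<subseteq> \<Union>F}"
    by (intro CollectI exI[of _ ?F]) simp
  then show "{card F | F. finite F \<and> (\<forall>S\<in>F. is_rectangle R C Y S) \<and> supp R C Y \<subseteq> \<Union>F} \<noteq> {}"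
    by (rule ne_in)
qed

lemma br_le: "finite R \<Longrightarrow> finite C \<Longrightarrow> finite F \<Longrightarrow> \<forall>S\<in>F. is_rectangle R C Y S \<Longrightarrow>
   supp R C Y \<subseteq> \<Union>F \<Longrightarrow> br R C Y \<le> card F"
proof -
  assume a: "finite R" "finite C" "finite F" "\<forall>S\<in>F. is_rectangle R C Y S" "supp R C Y \<subseteq> \<Union>F"
  have "card F \<in> {card F | F. finite F \<and> (\<forall>S\<in>F. is_rectangle R C Y S) \<and> supp R C Y \<subseteq> \<Union>F}"
    using a(3-5) by (intro CollectI exI[of _ F]) simp
  then show ?thesis unfolding br_def by (rule Min_le[OF br_fin(1)[OF a(1,2)]])
qed

lemma br_ex: "finite R \<Longrightarrow> finite C \<Longrightarrow> \<exists>F. finite F \<and> (\<forall>S\<in>F. is_rectangle R C Y S) \<and>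
   supp R C Y \<subseteq> \<Union>F \<and> card F = br R C Y"
proof -
  assume a: "finite R" "finite C"
  have "Min {card F | F. finite F \<and> (\<forall>S\<in>F. is_rectangle R C Y S) \<and> supp R C Y \<subseteq> \<Union>F} \<in>
     {card F | F. finite F \<and> (\<forall>S\<in>F. is_rectangle R C Y S) \<and> supp R C Y \<subseteq> \<Union>F}"
    using Min_in[OF br_fin[OF a]] .
  then show ?thesis unfolding br_def by auto
qed

lemma rect_mono: assumes "is_rectangle R' C' Y S" "R' \<subseteq> R" "C' \<subseteq> C" shows "is_rectangle R C Y S"
proof -
  obtain I J where IJ: "I \<subseteq> R'" "J \<subseteq> C'" "S = I \<times> J" "\<forall>i\<in>I. \<forall>j\<in>J. Y i j \<noteq> Zero"
    using assms(1) unfolding is_rectangle_def by (elim exE conjE) (rule that)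
  have "I \<subseteq> R" using IJ(1) assms(2) by (rule order_trans)
  moreover have "J \<subseteq> C" using IJ(2) assms(3) by (rule order_trans)
  ultimately
  show ?thesis unfolding is_rectangle_def using IJ(3,4) by (intro exI[of _ I] exI[of _ J]) simp
qed

lemma rect_restrict: "is_rectangle R C Y S \<Longrightarrow> R' \<subseteq> R \<Longrightarrow> C' \<subseteq> C \<Longrightarrow> is_rectangle R' C' Y (S \<inter> (R' \<times> C'))"
  unfolding is_rectangle_def
proof (elim exE conjE)
  fix I J assume h: "I \<subseteq> R" "J \<subseteq> C" "S = I \<times> J" "\<forall>i\<in>I. \<forall>j\<in>J. Y i j \<noteq> Zero"
  show "\<exists>I J. I \<subseteq> R' \<and> J \<subseteq> C' \<and> S \<inter> R' \<times> C' = I \<times> J \<and> (\<forall>i\<in>I. \<forall>j\<in>J. Y i j \<noteq> Zero)"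
    using h by (intro exI[of _ "I \<inter> R'"] exI[of _ "J \<inter> C'"]) auto
qed

lemma iso_transfer: assumes "isolated R' C' Y X" "R' \<subseteq> R" "C' \<subseteq> C" shows "isolated R C Y X"
proof -
  have sub: "X \<subseteq> R' \<times> C'" using isolated_sub[OF assms(1)] .
  have "X \<subseteq> supp R' C' Y" using assms(1) unfolding isolated_def by blast
  then have "X \<subseteq> supp R C Y" using assms(2,3) unfolding supp_def by blast
  moreover have "\<forall>x\<in>X. \<forall>y\<in>X. x \<noteq> y \<longrightarrow> \<not> (\<exists>S. is_rectangle R C Y S \<and> x \<in> S \<and> y \<in> S)"
  proof (intro ballI impI notI)
    fix x y assume xy: "x \<in> X" "y \<in> X" "x \<noteq> y" "\<exists>S. is_rectangle R C Y S \<and> x \<in> S \<and> y \<in> S"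
    then obtain S where S: "is_rectangle R C Y S" "x \<in> S" "y \<in> S" by blast
    have "is_rectangle R' C' Y (S \<inter> (R' \<times> C'))" using rect_restrict[OF S(1) assms(2,3)] .
    moreover have "x \<in> S \<inter> (R' \<times> C')" "y \<in> S \<inter> (R' \<times> C')" using S sub xy by auto
    ultimately show False using assms(1) xy unfolding isolated_def by blast
  qed
  ultimately show ?thesis unfolding isolated_def by blast
qed

lemma iso_mono: "finite R \<Longrightarrow> finite C \<Longrightarrow> R' \<subseteq> R \<Longrightarrow> C' \<subseteq> C \<Longrightarrow> iso_num R' C' Y \<le> iso_num R C Y"
proof -
  assume a: "finite R" "finite C" "R' \<subseteq> R" "C' \<subseteq> C"
  have "finite R'" "finite C'" using finite_subset[OF a(3,1)] finite_subset[OF a(4,2)] by auto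
  then obtain X where "isolated R' C' Y X" "card X = iso_num R' C' Y" using iso_ex by blast
  then show ?thesis using iso_ge[OF a(1,2) iso_transfer[OF _ a(3,4)]] by metis
qed

lemma br_noone:
  assumes "finite R" "finite C" "R' \<subseteq> R" "C' \<subseteq> C" "supp R C Y \<subseteq> supp R' C' Y"
  shows "br R C Y \<le> br R' C' Y"
proof -
  obtain F where F: "finite F" "\<forall>S\<in>F. is_rectangle R' C' Y S" "supp R' C' Y \<subseteq> \<Union>F" "card F = br R' C' Y"
    using br_ex[OF finite_subset[OF assms(3,1)] finite_subset[OF assms(4,2)], of Y] by (rule exE) blast
  have "\<forall>S\<in>F. is_rectangle R C Y S"
  proof
    fix S assume "S \<in> F"
    then have "is_rectangle R' C' Y S" using F(2) by blast
    then show "is_rectangle R C Y S" by (rule rect_mono) (use assms in auto)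
  qed
  then show ?thesis using br_le[OF assms(1,2) F(1)] F assms(5) by auto
qed

lemma rowB:
  assumes fin: "finite R" "finite C" and ij: "i \<in> R" "j \<in> C" "Y i j = One"
    and z: "\<forall>j'\<in>C. j' \<noteq> j \<longrightarrow> Y i j' = Zero"
  shows "iso_num R (C-{j}) Y + 1 \<le> iso_num R C Y" "br R C Y \<le> br R (C-{j}) Y + 1"
proof -
  obtain X where X: "isolated R (C-{j}) Y X" "card X = iso_num R (C-{j}) Y"
    using iso_ex[OF fin(1) finite_Diff[OF fin(2)], of "{j}" Y] by blast
  have Xi: "isolated R C Y X" using iso_transfer[OF X(1)] by blast
  have sub: "X \<subseteq> R \<times> (C-{j})" using isolated_sub[OF X(1)] .
  have nin: "(i,j) \<notin> X" using sub by auto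
  have finX: "finite X" using finite_subset[OF sub] fin by simp
  have "isolated R C Y (insert (i,j) X)"
    unfolding isolated_def
  proof (intro conjI)
    have "X \<subseteq> supp R C Y" using Xi unfolding isolated_def by blast
    then show "insert (i, j) X \<subseteq> supp R C Y" using ij by (auto simp: supp_def)
    show "\<forall>x\<in>insert (i, j) X. \<forall>y\<in>insert (i, j) X. x \<noteq> y \<longrightarrow> \<not> (\<exists>S. is_rectangle R C Y S \<and> x \<in> S \<and> y \<in> S)"
    proof (intro ballI impI notI)
      fix x y assume xy: "x \<in> insert (i, j) X" "y \<in> insert (i, j) X" "x \<noteq> y"
        "\<exists>S. is_rectangle R C Y S \<and> x \<in> S \<and> y \<in> S"
      then obtain S where S: "is_rectangle R C Y S" "x \<in> S" "y \<in> S" by blast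
      then obtain I J where IJ: "S = I \<times> J" "I \<subseteq> R" "J \<subseteq> C" "\<forall>a\<in>I. \<forall>b\<in>J. Y a b \<noteq> Zero"
        unfolding is_rectangle_def by blast
      have key: False if "(i,j) \<in> S" "z \<in> X" "z \<in> S" for z
      proof -
        obtain a b where ab: "z = (a,b)" by force
        have aR: "b \<in> C" "b \<noteq> j" using sub that(2) ab by auto
        have jJ: "i \<in> I" "b \<in> J" using that(1,3) IJ(1) ab by auto
        have "Y i b = Zero" using z aR by blast
        moreover have "Y i b \<noteq> Zero" using IJ(4) jJ by blast
        ultimately show False by simp
      qed
      show False
      proof (cases "x = (i,j)")
        case True
        then have "y \<in> X" using xy by auto
        then show ?thesis using key[of y] True S by auto
      next
        case False
        note xX = this
        show ?thesis
        proof (cases "y = (i,j)")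
          case True
          then have "x \<in> X" using xy xX by auto
          then show ?thesis using key[of x] True S by auto
        next
          case False
          then have xX': "x \<in> X" "y \<in> X" using xy xX by auto
          have "\<not> (\<exists>S. is_rectangle R C Y S \<and> x \<in> S \<and> y \<in> S)"
            using Xi xX' xy(3) unfolding isolated_def by blast
          then show ?thesis using S by blast
        qed
      qed
    qed
  qed
  then have "card (insert (i,j) X) \<le> iso_num R C Y" using iso_ge[OF fin] by blast
  moreover have "card (insert (i,j) X) = card X + 1" using nin finX by simp
  ultimately show "iso_num R (C-{j}) Y + 1 \<le> iso_num R C Y" using X(2) by linarith
  obtain F where F0: "finite F \<and> (\<forall>S\<in>F. is_rectangle R (C-{j}) Y S) \<and> supp R (C-{j}) Y \<subseteq> \<Union>F \<and>
     card F = br R (C-{j}) Y"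
    using br_ex[OF fin(1) finite_Diff[OF fin(2)], of "{j}" Y] by (rule exE)
  note F = conjunct1[OF F0] conjunct1[OF conjunct2[OF F0]] conjunct1[OF conjunct2[OF conjunct2[OF F0]]]
    conjunct2[OF conjunct2[OF conjunct2[OF F0]]]
  define K where "K = {a \<in> R. Y a j \<noteq> Zero}"
  have rK: "is_rectangle R C Y (K \<times> {j})" unfolding is_rectangle_def K_def using ij
    by (intro exI[of _ "{a \<in> R. Y a j \<noteq> Zero}"] exI[of _ "{j}"]) auto
  have "\<forall>S\<in>F. is_rectangle R C Y S"
  proof
    fix S assume "S \<in> F"
    then have "is_rectangle (R) (C-{j}) Y S" using F(2) by blast
    then show "is_rectangle R C Y S" by (rule rect_mono) auto
  qed
  then have rI: "\<forall>S\<in>insert (K \<times> {j}) F. is_rectangle R C Y S" using rK by simp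
  have cI: "supp R C Y \<subseteq> \<Union>(insert (K \<times> {j}) F)"
  proof
    fix p assume p: "p \<in> supp R C Y"
    obtain a b where ab: "p = (a,b)" by force
    show "p \<in> \<Union>(insert (K \<times> {j}) F)"
    proof (cases "b = j")
      case True then show ?thesis using p ab unfolding K_def supp_def by auto
    next
      case False
      then have "p \<in> supp R (C-{j}) Y" using p ab unfolding supp_def by auto
      then show ?thesis using F(3) by auto
    qed
  qed
  have fI: "finite (insert (K \<times> {j}) F)" using F(1) by simp
  have b1: "br R C Y \<le> card (insert (K \<times> {j}) F)" by (rule br_le[OF fin fI rI cI])
  have b2: "card (insert (K \<times> {j}) F) \<le> card F + 1"
    using F(1) by (cases "K \<times> {j} \<in> F") (simp_all add: insert_absorb)
  show "br R C Y \<le> br R (C-{j}) Y + 1" using b1 b2 F(4) by linarith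
qed

lemma colB:
  assumes fin: "finite R" "finite C" and ij: "i \<in> R" "j \<in> C" "Y i j = One"
    and z: "\<forall>i'\<in>R. i' \<noteq> i \<longrightarrow> Y i' j = Zero"
  shows "iso_num (R-{i}) C Y + 1 \<le> iso_num R C Y" "br R C Y \<le> br (R-{i}) C Y + 1"
proof -
  obtain X where X: "isolated (R-{i}) C Y X" "card X = iso_num (R-{i}) C Y"
    using iso_ex[OF finite_Diff[OF fin(1)] fin(2), of "{i}" Y] by blast
  have Xi: "isolated R C Y X" using iso_transfer[OF X(1)] by blast
  have sub: "X \<subseteq> (R-{i}) \<times> C" using isolated_sub[OF X(1)] .
  have nin: "(i,j) \<notin> X" using sub by auto
  have finX: "finite X" using finite_subset[OF sub] fin by simp
  have "isolated R C Y (insert (i,j) X)"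
    unfolding isolated_def
  proof (intro conjI)
    have "X \<subseteq> supp R C Y" using Xi unfolding isolated_def by blast
    then show "insert (i, j) X \<subseteq> supp R C Y" using ij by (auto simp: supp_def)
    show "\<forall>x\<in>insert (i, j) X. \<forall>y\<in>insert (i, j) X. x \<noteq> y \<longrightarrow> \<not> (\<exists>S. is_rectangle R C Y S \<and> x \<in> S \<and> y \<in> S)"
    proof (intro ballI impI notI)
      fix x y assume xy: "x \<in> insert (i, j) X" "y \<in> insert (i, j) X" "x \<noteq> y"
        "\<exists>S. is_rectangle R C Y S \<and> x \<in> S \<and> y \<in> S"
      then obtain S where S: "is_rectangle R C Y S" "x \<in> S" "y \<in> S" by blast
      then obtain I J where IJ: "S = I \<times> J" "I \<subseteq> R" "J \<subseteq> C" "\<forall>a\<in>I. \<forall>b\<in>J. Y a b \<noteq> Zero"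
        unfolding is_rectangle_def by blast
      have key: False if "(i,j) \<in> S" "z \<in> X" "z \<in> S" for z
      proof -
        obtain a b where ab: "z = (a,b)" by force
        have aR: "a \<in> R" "a \<noteq> i" using sub that(2) ab by auto
        have jJ: "j \<in> J" "a \<in> I" using that(1,3) IJ(1) ab by auto
        have "Y a j = Zero" using z aR by blast
        moreover have "Y a j \<noteq> Zero" using IJ(4) jJ by blast
        ultimately show False by simp
      qed
      show False
      proof (cases "x = (i,j)")
        case True
        then have "y \<in> X" using xy by auto
        then show ?thesis using key[of y] True S by auto
      next
        case False
        note xX = this
        show ?thesis
        proof (cases "y = (i,j)")
          case True
          then have "x \<in> X" using xy xX by auto
          then show ?thesis using key[of x] True S by auto
        next
          case False
          then have xX': "x \<in> X" "y \<in> X" using xy xX by auto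
          have "\<not> (\<exists>S. is_rectangle R C Y S \<and> x \<in> S \<and> y \<in> S)"
            using Xi xX' xy(3) unfolding isolated_def by blast
          then show ?thesis using S by blast
        qed
      qed
    qed
  qed
  then have "card (insert (i,j) X) \<le> iso_num R C Y" using iso_ge[OF fin] by blast
  moreover have "card (insert (i,j) X) = card X + 1" using nin finX by simp
  ultimately show "iso_num (R-{i}) C Y + 1 \<le> iso_num R C Y" using X(2) by linarith
  obtain F where F0: "finite F \<and> (\<forall>S\<in>F. is_rectangle (R-{i}) C Y S) \<and> supp (R-{i}) C Y \<subseteq> \<Union>F \<and>
     card F = br (R-{i}) C Y"
    using br_ex[OF finite_Diff[OF fin(1)] fin(2), of "{i}" Y] by (rule exE)
  note F = conjunct1[OF F0] conjunct1[OF conjunct2[OF F0]] conjunct1[OF conjunct2[OF conjunct2[OF F0]]]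
    conjunct2[OF conjunct2[OF conjunct2[OF F0]]]
  define K where "K = {b \<in> C. Y i b \<noteq> Zero}"
  have rK: "is_rectangle R C Y ({i} \<times> K)" unfolding is_rectangle_def K_def using ij
    by (intro exI[of _ "{i}"] exI[of _ "{b \<in> C. Y i b \<noteq> Zero}"]) auto
  have "\<forall>S\<in>F. is_rectangle R C Y S"
  proof
    fix S assume "S \<in> F"
    then have "is_rectangle (R-{i}) (C) Y S" using F(2) by blast
    then show "is_rectangle R C Y S" by (rule rect_mono) auto
  qed
  then have rI: "\<forall>S\<in>insert ({i} \<times> K) F. is_rectangle R C Y S" using rK by simp
  have cI: "supp R C Y \<subseteq> \<Union>(insert ({i} \<times> K) F)"
  proof
    fix p assume p: "p \<in> supp R C Y"
    obtain a b where ab: "p = (a,b)" by force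
    show "p \<in> \<Union>(insert ({i} \<times> K) F)"
    proof (cases "a = i")
      case True then show ?thesis using p ab unfolding K_def supp_def by auto
    next
      case False
      then have "p \<in> supp (R-{i}) C Y" using p ab unfolding supp_def by auto
      then show ?thesis using F(3) by auto
    qed
  qed
  have fI: "finite (insert ({i} \<times> K) F)" using F(1) by simp
  have b1: "br R C Y \<le> card (insert ({i} \<times> K) F)" by (rule br_le[OF fin fI rI cI])
  have b2: "card (insert ({i} \<times> K) F) \<le> card F + 1"
    using F(1) by (cases "{i} \<times> K \<in> F") (simp_all add: insert_absorb)
  show "br R C Y \<le> br (R-{i}) C Y + 1" using b1 b2 F(4) by linarith
qed

lemma mnf_lt: "minimally_non_firm R C Y \<Longrightarrow> iso_num R C Y < br R C Y"
  unfolding minimally_non_firm_def by (rule conjunct1)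

lemma mnf_sub: "minimally_non_firm R C Y \<Longrightarrow> I \<subseteq> R \<Longrightarrow> J \<subseteq> C \<Longrightarrow> I \<noteq> R \<or> J \<noteq> C \<Longrightarrow>
   iso_num I J Y = br I J Y"
proof -
  assume a: "minimally_non_firm R C Y" "I \<subseteq> R" "J \<subseteq> C" "I \<noteq> R \<or> J \<noteq> C"
  from a(1) have "\<forall>I J. I \<subseteq> R \<and> J \<subseteq> C \<and> (I \<noteq> R \<or> J \<noteq> C) \<longrightarrow> iso_num I J Y = br I J Y"
    unfolding minimally_non_firm_def by (rule conjunct2)
  then show ?thesis using a(2-4) by simp
qed

lemma row_case:
  assumes fin: "finite R" "finite C" and mnf: "minimally_non_firm R C Y" and i: "i \<in> R"
  shows "card {j \<in> C. Y i j \<noteq> Zero} \<ge> 2"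
proof (rule ccontr)
  assume c: "\<not> card {j \<in> C. Y i j \<noteq> Zero} \<ge> 2"
  have lt: "iso_num R C Y < br R C Y" using mnf_lt[OF mnf] .
  have eq: "iso_num (R-{i}) C Y = br (R-{i}) C Y"
    using mnf_sub[OF mnf, of "R-{i}" C] i by auto
  show False
  proof (cases "\<exists>j\<in>C. Y i j = One")
    case False
    have "iso_num (R-{i}) C Y \<le> iso_num R C Y" by (rule iso_mono[OF fin]) auto
    moreover have "br R C Y \<le> br (R-{i}) C Y"
      by (rule br_noone[OF fin]) (use False in \<open>auto simp: supp_def\<close>)
    ultimately show False using lt eq by simp
  next
    case True
    then obtain j where j: "j \<in> C" "Y i j = One" by blast
    have z: "\<forall>j'\<in>C. j' \<noteq> j \<longrightarrow> Y i j' = Zero"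
    proof (intro ballI impI, rule ccontr)
      fix j' assume "j' \<in> C" "j' \<noteq> j" "Y i j' \<noteq> Zero"
      then have "{j, j'} \<subseteq> {j \<in> C. Y i j \<noteq> Zero}" using j by auto
      then have "card {j, j'} \<le> card {j \<in> C. Y i j \<noteq> Zero}" using fin by (simp add: card_mono)
      then show False using c \<open>j' \<noteq> j\<close> by simp
    qed
    have eq2: "iso_num R (C-{j}) Y = br R (C-{j}) Y"
      using mnf_sub[OF mnf, of R "C-{j}"] j by auto
    from rowB[where R=R and C=C and i=i and j=j and Y=Y, OF fin i j z] eq2 lt show False by simp
  qed
qed

lemma col_case:
  assumes fin: "finite R" "finite C" and mnf: "minimally_non_firm R C Y" and j: "j \<in> C"
  shows "card {i \<in> R. Y i j \<noteq> Zero} \<ge> 2"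
proof (rule ccontr)
  assume c: "\<not> card {i \<in> R. Y i j \<noteq> Zero} \<ge> 2"
  have lt: "iso_num R C Y < br R C Y" using mnf_lt[OF mnf] .
  have eq: "iso_num R (C-{j}) Y = br R (C-{j}) Y"
    using mnf_sub[OF mnf, of R "C-{j}"] j by auto
  show False
  proof (cases "\<exists>i\<in>R. Y i j = One")
    case False
    have "iso_num R (C-{j}) Y \<le> iso_num R C Y" by (rule iso_mono[OF fin]) auto
    moreover have "br R C Y \<le> br R (C-{j}) Y"
      by (rule br_noone[OF fin]) (use False in \<open>auto simp: supp_def\<close>)
    ultimately show False using lt eq by simp
  next
    case True
    then obtain i where i: "i \<in> R" "Y i j = One" by blast
    have z: "\<forall>i'\<in>R. i' \<noteq> i \<longrightarrow> Y i' j = Zero"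
    proof (intro ballI impI, rule ccontr)
      fix i' assume "i' \<in> R" "i' \<noteq> i" "Y i' j \<noteq> Zero"
      then have "{i, i'} \<subseteq> {i \<in> R. Y i j \<noteq> Zero}" using i by auto
      then have "card {i, i'} \<le> card {i \<in> R. Y i j \<noteq> Zero}" using fin by (simp add: card_mono)
      then show False using c \<open>i' \<noteq> i\<close> by simp
    qed
    have eq2: "iso_num (R-{i}) C Y = br (R-{i}) C Y"
      using mnf_sub[OF mnf, of "R-{i}" C] i by auto
    from colB[where R=R and C=C and i=i and j=j and Y=Y, OF fin i(1) j i(2) z] eq2 lt show False by simp
  qed
qed

theorem lemma5:
  fixes m n :: nat and Y :: "nat \<Rightarrow> nat \<Rightarrow> gentry"
  assumes "minimally_non_firm {..<m} {..<n} Y"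
  shows "(\<forall>i<m. card {j. j < n \<and> Y i j \<noteq> Zero} \<ge> 2) \<and>
         (\<forall>j<n. card {i. i < m \<and> Y i j \<noteq> Zero} \<ge> 2)"
proof (intro conjI allI impI)
  fix i assume "i < m"
  then have "card {j \<in> {..<n}. Y i j \<noteq> Zero} \<ge> 2" using row_case[OF _ _ assms] by auto
  then show "card {j. j < n \<and> Y i j \<noteq> Zero} \<ge> 2" by simp
next
  fix j assume "j < n"
  then have "card {i \<in> {..<m}. Y i j \<noteq> Zero} \<ge> 2" using col_case[OF _ _ assms] by auto
  then show "card {i. i < m \<and> Y i j \<noteq> Zero} \<ge> 2" by simp
qed

end
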